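(* Let $\mathcal{Q}$, $\mathcal{S}$, $\mathcal{A}$ be countable sets (questions, solutions, answers), let $\mathcal{D}$ be a probability distribution on $\mathcal{Q}$, and let $a^*:\mathcal{Q}\to\mathcal{A}$ assign to each question its reference answer. For each $q$, let $\pi_\theta(\cdot\mid q)$ be a probability distribution on $\mathcal{S}$ and for each $s$ let $\pi_\theta(\cdot\mid s,q)$ be a probability distribution on $\mathcal{A}$, with joint law $\pi_\theta(s,a\mid q)=\pi_\theta(s\mid q)\pi_\theta(a\mid s,q)$ and answer marginal $\pi_\theta(a\mid q)=\sum_s\pi_\theta(s\mid q)\pi_\theta(a\mid s,q)$. For $a$ with $\pi_\theta(a\mid q)>0$ define $\pi_\theta(s'\mid q,a)=\pi_\theta(s'\mid q)\pi_\theta(a\mid s',q)/\pi_\theta(a\mid q)$ and the conditional expectation reward $$\rho(a,a^*(q))=\sum_{s'\in\mathcal{S}}\pi_\theta(s'\mid q,a)\,\pi_\theta(a^*(q)\mid s',q).$$ Then $$\mathcal{L}_\rho(\theta):=\mathbb{E}_{q\sim\mathcal{D},\,(s,a)\sim\pi_\theta(\cdot\mid q)}\big[\rho(a,a^*(q))\big]=\mathbb{E}_{q\sim\mathcal{D},\,(s,a)\sim\pi_\theta(\cdot\mid q)}\big[\mathbb{I}(a=a^*(q))\big],$$ where $\mathbb{I}(a=a^*(q))$ is $1$ if $a=a^*(q)$ and $0$ otherwise.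
   Context: Here $\rho(a,a^* )$ is the conditional expectation reward (CER): the expected likelihood, under the policy, of generating the reference answer $a^*$ from a solution drawn from the posterior over solutions given that the answer $a$ was generated. It is only evaluated at answers $a$ that occur with positive probability, so the left-hand expectation is well defined. *)

theory Defs
  imports "HOL-Probability.Probability"
begin

text \<open>Policy: pS q is pi(. | q) on solutions, pA q s is pi(. | s,q) on answers.\<close>

definition ans_marg :: "('q \<Rightarrow> 's pmf) \<Rightarrow> ('q \<Rightarrow> 's \<Rightarrow> 'a pmf) \<Rightarrow> 'q \<Rightarrow> 'a \<Rightarrow> real" where
  "ans_marg pS pA q a = (\<Sum>\<^sub>\<infinity> s. pmf (pS q) s * pmf (pA q s) a)"

definition sol_post :: "('q \<Rightarrow> 's pmf) \<Rightarrow> ('q \<Rightarrow> 's \<Rightarrow> 'a pmf) \<Rightarrow> 'q \<Rightarrow> 'a \<Rightarrow> 's \<Rightarrow> real" where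
  "sol_post pS pA q a s' = pmf (pS q) s' * pmf (pA q s') a / ans_marg pS pA q a"

definition cer :: "('q \<Rightarrow> 's pmf) \<Rightarrow> ('q \<Rightarrow> 's \<Rightarrow> 'a pmf) \<Rightarrow> 'q \<Rightarrow> 'a \<Rightarrow> 'a \<Rightarrow> real" where
  "cer pS pA q a a' = (\<Sum>\<^sub>\<infinity> s'. sol_post pS pA q a s' * pmf (pA q s') a')"

definition joint :: "('q \<Rightarrow> 's pmf) \<Rightarrow> ('q \<Rightarrow> 's \<Rightarrow> 'a pmf) \<Rightarrow> 'q \<Rightarrow> ('s \<times> 'a) pmf" where
  "joint pS pA q = bind_pmf (pS q) (\<lambda>s. map_pmf (\<lambda>a. (s, a)) (pA q s))"

end

theory Submission
  imports Defs
begin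

no_notation Infinite_Sum.abs_summable_on (infixr \<open>abs'_summable'_on\<close> 46)

lemma pS_abs:
  fixes P :: "'s pmf" and g :: "'s \<Rightarrow> real"
  assumes "\<And>s. 0 \<le> g s" "\<And>s. g s \<le> 1"
  shows "(\<lambda>s. pmf P s * g s) abs_summable_on UNIV"
  by (rule abs_summable_on_comparison_test'[OF pmf_abs_summable[of P UNIV]])
     (use assms in \<open>auto simp: abs_mult intro!: mult_left_le\<close>)

lemma marg_eq:
  fixes P :: "'s pmf" and K :: "'s \<Rightarrow> 'a pmf"
  shows "(\<Sum>\<^sub>\<infinity> s. pmf P s * pmf (K s) a) = pmf (bind_pmf P K) a"
proof -
  have "(\<Sum>\<^sub>\<infinity> s. pmf P s * pmf (K s) a) = infsetsum (\<lambda>s. pmf P s * pmf (K s) a) UNIV"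
    by (rule infsetsum_infsum[symmetric], rule pS_abs) (auto simp: pmf_le_1)
  also have "\<dots> = measure_pmf.expectation P (\<lambda>s. pmf (K s) a)"
    by (simp add: pmf_expectation_eq_infsetsum)
  also have "\<dots> = pmf (bind_pmf P K) a" by (simp add: pmf_bind)
  finally show ?thesis .
qed

lemma inner_eq:
  fixes P :: "('s::countable) pmf" and K :: "'s \<Rightarrow> ('a::countable) pmf" and b :: 'a
  defines "m \<equiv> bind_pmf P K"
  defines "k \<equiv> (\<lambda>a s. pmf P s * pmf (K s) a * pmf (K s) b)"
  assumes cerdef: "\<And>a. c a = (\<Sum>\<^sub>\<infinity> s. pmf P s * pmf (K s) a / pmf m a * pmf (K s) b)"
  shows "measure_pmf.expectation m c = pmf m b"
proof -
  have kabs: "k a abs_summable_on UNIV" for a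
    unfolding k_def mult.assoc by (rule pS_abs) (auto simp: pmf_le_1 intro: mult_le_one)
  have F2: "pmf m a * c a = infsetsum (k a) UNIV" for a
  proof (cases "pmf m a = 0")
    case True
    hence "a \<notin> set_pmf m" by (simp add: set_pmf_eq)
    hence "k a s = 0" for s unfolding k_def m_def by (auto simp: set_pmf_iff)
    thus ?thesis using True by simp
  next
    case False
    have "c a = (\<Sum>\<^sub>\<infinity> s. k a s * inverse (pmf m a))"
      unfolding cerdef k_def by (simp add: field_simps)
    also have "\<dots> = (\<Sum>\<^sub>\<infinity> s. k a s) * inverse (pmf m a)" by (rule infsum_cmult_left')
    finally show ?thesis using False infsetsum_infsum[OF kabs[of a]] by simp
  qed
  have inn: "(\<Sum>\<^sub>a a. pmf P s * pmf (K s) a) = pmf P s" for s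
    by (subst infsetsum_cmult_right) (auto simp: infsetsum_pmf_eq_1[OF subset_UNIV])
  have jabs: "(\<lambda>(s, a). pmf P s * pmf (K s) a) abs_summable_on UNIV \<times> UNIV"
    by (subst abs_summable_on_Sigma_iff)
       (auto simp: abs_mult inn intro!: abs_summable_on_cmult_right pmf_abs_summable
         intro: abs_summable_on_comparison_test'[OF pmf_abs_summable[of P UNIV]]
         simp del: infsetsum_pmf_eq_1)
  have kabs2: "(\<lambda>(a, s). k a s) abs_summable_on UNIV \<times> UNIV"
  proof -
    have "(\<lambda>(a, s). pmf P s * pmf (K s) a) abs_summable_on UNIV \<times> UNIV"
    proof -
      have bij: "bij_betw prod.swap ((UNIV::'a set) \<times> (UNIV::'s set)) ((UNIV::'s set) \<times> (UNIV :: 'a set))"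
        by (rule bij_betwI[where g=prod.swap]) auto
      have "(\<lambda>x. (\<lambda>(s, a). pmf P s * pmf (K s) a) (prod.swap x)) abs_summable_on UNIV \<times> UNIV"
        using abs_summable_on_reindex_bij_betw[OF bij, of "\<lambda>(s, a). pmf P s * pmf (K s) a"] jabs by simp
      thus ?thesis by (simp add: case_prod_unfold)
    qed
    thus ?thesis
      by (rule abs_summable_on_comparison_test)
         (auto simp: k_def abs_mult pmf_le_1 intro!: mult_left_le)
  qed
  have "measure_pmf.expectation m c = infsetsum (\<lambda>a. infsetsum (k a) UNIV) UNIV"
    by (simp add: pmf_expectation_eq_infsetsum F2)
  also have "\<dots> = infsetsum (\<lambda>s. infsetsum (\<lambda>a. k a s) UNIV) UNIV"
    using infsetsum_swap[OF _ _ kabs2] by simp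
  also have "\<dots> = infsetsum (\<lambda>s. pmf P s * pmf (K s) b) UNIV"
  proof (rule infsetsum_cong)
    fix s
    have "infsetsum (\<lambda>a. k a s) UNIV = infsetsum (\<lambda>a. pmf (K s) a * (pmf P s * pmf (K s) b)) UNIV"
      unfolding k_def by (simp add: ac_simps)
    also have "\<dots> = pmf P s * pmf (K s) b"
      by (subst infsetsum_cmult_left) (auto simp: infsetsum_pmf_eq_1[OF subset_UNIV])
    finally show "infsetsum (\<lambda>a. k a s) UNIV = pmf P s * pmf (K s) b" .
  qed simp
  also have "\<dots> = measure_pmf.expectation P (\<lambda>s. pmf (K s) b)"
    by (simp add: pmf_expectation_eq_infsetsum)
  also have "\<dots> = pmf m b" by (simp add: pmf_bind m_def)
  finally show ?thesis .
qed

lemma joint_snd: "map_pmf snd (joint pS pA q) = bind_pmf (pS q) (pA q)"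
  unfolding joint_def by (simp add: map_bind_pmf pmf.map_comp o_def)

theorem theorem2:
  fixes D :: "('q::countable) pmf"
    and astar :: "'q \<Rightarrow> ('a::countable)"
    and pS :: "'q \<Rightarrow> ('s::countable) pmf"
    and pA :: "'q \<Rightarrow> 's \<Rightarrow> 'a pmf"
  shows "measure_pmf.expectation D (\<lambda>q. measure_pmf.expectation (joint pS pA q)
            (\<lambda>(s, a). cer pS pA q a (astar q)))
       = measure_pmf.expectation D (\<lambda>q. measure_pmf.expectation (joint pS pA q)
            (\<lambda>(s, a). if a = astar q then 1 else 0))"
proof -
  have "measure_pmf.expectation (joint pS pA q) (\<lambda>(s, a). cer pS pA q a (astar q))
      = measure_pmf.expectation (joint pS pA q) (\<lambda>(s, a). if a = astar q then 1 else 0)" for q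
  proof -
    let ?m = "bind_pmf (pS q) (pA q)"
    have L: "measure_pmf.expectation (joint pS pA q) (\<lambda>(s, a). cer pS pA q a (astar q))
        = measure_pmf.expectation ?m (\<lambda>a. cer pS pA q a (astar q))"
      unfolding joint_snd[symmetric] by (rule trans[OF _ integral_map_pmf[symmetric]]) (simp add: case_prod_unfold)
    have R: "measure_pmf.expectation (joint pS pA q) (\<lambda>(s, a). if a = astar q then 1 else 0)
        = measure_pmf.expectation ?m (\<lambda>a. if a = astar q then 1 else (0::real))"
      unfolding joint_snd[symmetric] by (rule trans[OF _ integral_map_pmf[symmetric]]) (simp add: case_prod_unfold)
    have R2: "measure_pmf.expectation ?m (\<lambda>a. if a = astar q then 1 else (0::real)) = pmf ?m (astar q)"
      by (subst integral_measure_pmf_real[where A="{astar q}"]) (auto split: if_splits)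
    have L2: "measure_pmf.expectation ?m (\<lambda>a. cer pS pA q a (astar q)) = pmf ?m (astar q)"
      by (rule inner_eq) (simp add: cer_def sol_post_def ans_marg_def marg_eq)
    show ?thesis using L R R2 L2 by simp
  qed
  thus ?thesis by simp
qed

end
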